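(* Let $n\ge2$ and let $(V,\langle-,\ldots,-\rangle_n)$ be an alternating (resp. symmetric) $n$-linear space over a field $K$ with $V$ infinite-dimensional. Then $\langle-,\ldots,-\rangle_n$ is non-degenerate if and only if it is generic.
   Context: Let $\lozenge^{n-1}V$ be the exterior power $\bigwedge^{n-1}V$ in the alternating case and the symmetric power $\bigvee^{n-1}V$ in the symmetric case, and let $\langle-,-\rangle_2:(\lozenge^{n-1}V)\times V\to K$ be the induced bilinear form, $\langle\overline{v_1\otimes\cdots\otimes v_{n-1}},v\rangle_2=\langle v_1,\ldots,v_{n-1},v\rangle_n$ extended linearly. The form is non-degenerate if for every nonzero $t\in\lozenge^{n-1}V$ there is $w\in V$ with $\langle t,w\rangle_2\ne0$; it is generic if for every $m\in\mathbb{N}$, all linearly independent $t_1,\ldots,t_m\in\lozenge^{n-1}V$ and all $k_1,\ldots,k_m\in K$ there is $w\in V$ with $\langle t_i,w\rangle_2=k_i$ for all $i\le m$. *)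

theory Defs
  imports Complex_Main "HOL-Library.Multiset" "HOL-Library.Function_Algebras"
begin

text \<open>An n-linear form on the vector space V (= the whole type 'v, scalar
multiplication scale over the field 'k) is a function on lists of length n.\<close>

definition multilinear_form ::
  "('k::field \<Rightarrow> 'v::ab_group_add \<Rightarrow> 'v) \<Rightarrow> nat \<Rightarrow> ('v list \<Rightarrow> 'k) \<Rightarrow> bool" where
  "multilinear_form scale n f \<longleftrightarrow>
     (\<forall>xs i. length xs = n \<longrightarrow> i < n \<longrightarrow>
        Vector_Spaces.linear scale ((*) :: 'k \<Rightarrow> 'k \<Rightarrow> 'k) (\<lambda>v. f (xs[i := v])))"

definition alternating_form :: "nat \<Rightarrow> ('v list \<Rightarrow> 'k::field) \<Rightarrow> bool" where
  "alternating_form n f \<longleftrightarrow>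
     (\<forall>xs i j. length xs = n \<longrightarrow> i < j \<longrightarrow> j < n \<longrightarrow> xs ! i = xs ! j \<longrightarrow> f xs = 0)"

definition symmetric_form :: "nat \<Rightarrow> ('v list \<Rightarrow> 'k::field) \<Rightarrow> bool" where
  "symmetric_form n f \<longleftrightarrow>
     (\<forall>xs ys. length xs = n \<longrightarrow> mset xs = mset ys \<longrightarrow> f xs = f ys)"

definition nlinear_space ::
  "('k::field \<Rightarrow> 'v::ab_group_add \<Rightarrow> 'v) \<Rightarrow> nat \<Rightarrow> bool \<Rightarrow> ('v list \<Rightarrow> 'k) \<Rightarrow> bool" where
  "nlinear_space scale n alt f \<longleftrightarrow> vector_space scale \<and> multilinear_form scale n f \<and>
     (if alt then alternating_form n f else symmetric_form n f)"

definition infinite_dimensional :: "('k::field \<Rightarrow> 'v::ab_group_add \<Rightarrow> 'v) \<Rightarrow> bool" where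
  "infinite_dimensional scale \<longleftrightarrow> \<not> (\<exists>B. finite B \<and> module.span scale B = UNIV)"

text \<open>Free vector space on (m)-tuples of vectors: finitely supported functions
'v list \<Rightarrow> 'k supported on lists of length m.  The tensor power
V^{\<otimes>m} is its quotient by the multilinearity relations, and
\<lozenge>^m V (exterior / symmetric power) is its quotient by the span of the
multilinearity relations together with the alternating (resp. symmetric) relations.\<close>

definition delta :: "'a \<Rightarrow> 'a \<Rightarrow> 'k::field" where
  "delta a = (\<lambda>b. if b = a then 1 else 0)"

definition free_comb :: "nat \<Rightarrow> ('v list \<Rightarrow> 'k::field) set" where
  "free_comb m = {c. finite {xs. c xs \<noteq> 0} \<and> (\<forall>xs. c xs \<noteq> 0 \<longrightarrow> length xs = m)}"

definition fscale :: "'k::field \<Rightarrow> ('a \<Rightarrow> 'k) \<Rightarrow> ('a \<Rightarrow> 'k)" where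
  "fscale a c = (\<lambda>x. a * c x)"

definition rel_gens ::
  "('k::field \<Rightarrow> 'v::ab_group_add \<Rightarrow> 'v) \<Rightarrow> nat \<Rightarrow> bool \<Rightarrow> ('v list \<Rightarrow> 'k) set" where
  "rel_gens scale m alt =
     {delta (xs[i := scale a u + scale b v]) - fscale a (delta (xs[i := u])) - fscale b (delta (xs[i := v]))
        | xs i a b u v. length xs = m \<and> i < m}
   \<union> (if alt then {delta xs | xs i j. length xs = m \<and> i < j \<and> j < m \<and> xs ! i = xs ! j}
      else {delta xs - delta ys | xs ys. length xs = m \<and> mset xs = mset ys})"

text \<open>Representatives of zero in \<lozenge>^m V.\<close>
definition rel_space ::
  "('k::field \<Rightarrow> 'v::ab_group_add \<Rightarrow> 'v) \<Rightarrow> nat \<Rightarrow> bool \<Rightarrow> ('v list \<Rightarrow> 'k) set" where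
  "rel_space scale m alt = module.span fscale (rel_gens scale m alt)"

text \<open>The induced pairing \<langle>t, w\<rangle>_2 on representatives t of \<lozenge>^{n-1} V.\<close>
definition pairing2 :: "('v list \<Rightarrow> 'k::field) \<Rightarrow> ('v list \<Rightarrow> 'k) \<Rightarrow> 'v \<Rightarrow> 'k" where
  "pairing2 f c w = (\<Sum>xs\<in>{xs. c xs \<noteq> 0}. c xs * f (xs @ [w]))"

definition nondegenerate ::
  "('k::field \<Rightarrow> 'v::ab_group_add \<Rightarrow> 'v) \<Rightarrow> nat \<Rightarrow> bool \<Rightarrow> ('v list \<Rightarrow> 'k) \<Rightarrow> bool" where
  "nondegenerate scale n alt f \<longleftrightarrow>
     (\<forall>c \<in> free_comb (n - 1). c \<notin> rel_space scale (n - 1) alt \<longrightarrow> (\<exists>w. pairing2 f c w \<noteq> 0))"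

text \<open>t_0,...,t_{m-1} (given by representatives) are linearly independent in \<lozenge>^{n-1} V.\<close>
definition lin_indep_mod ::
  "('k::field \<Rightarrow> 'v::ab_group_add \<Rightarrow> 'v) \<Rightarrow> nat \<Rightarrow> bool \<Rightarrow> nat \<Rightarrow> (nat \<Rightarrow> 'v list \<Rightarrow> 'k) \<Rightarrow> bool" where
  "lin_indep_mod scale m alt k t \<longleftrightarrow>
     (\<forall>a. (\<Sum>i<k. fscale (a i) (t i)) \<in> rel_space scale m alt \<longrightarrow> (\<forall>i<k. a i = 0))"

definition generic ::
  "('k::field \<Rightarrow> 'v::ab_group_add \<Rightarrow> 'v) \<Rightarrow> nat \<Rightarrow> bool \<Rightarrow> ('v list \<Rightarrow> 'k) \<Rightarrow> bool" where
  "generic scale n alt f \<longleftrightarrow>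
     (\<forall>m t kk. (\<forall>i<m. t i \<in> free_comb (n - 1)) \<longrightarrow> lin_indep_mod scale (n - 1) alt m t \<longrightarrow>
        (\<exists>w. \<forall>i<m. pairing2 f (t i) w = kk i))"

end

theory Submission imports Defs begin

lemma mod_fscale: "module (fscale :: 'k::field \<Rightarrow> ('a \<Rightarrow> 'k) \<Rightarrow> ('a \<Rightarrow> 'k))"
  unfolding module_def fscale_def by (auto simp: fun_eq_iff algebra_simps)

lemma fscale_neg: "fscale (- a) c = - fscale (a::'k::field) c"
  by (simp add: fscale_def fun_eq_iff)

lemma supp_add: "{x. (c + d) x \<noteq> (0::'k::field)} \<subseteq> {x. c x \<noteq> 0} \<union> {x. d x \<noteq> 0}"
  by auto
lemma supp_diff: "{x. (c - d) x \<noteq> (0::'k::field)} \<subseteq> {x. c x \<noteq> 0} \<union> {x. d x \<noteq> 0}"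
  by auto
lemma supp_scale: "{x. fscale a c x \<noteq> (0::'k::field)} \<subseteq> {x. c x \<noteq> 0}"
  by (auto simp: fscale_def)

lemma fc_add: "c \<in> free_comb m \<Longrightarrow> d \<in> free_comb m \<Longrightarrow> c + d \<in> free_comb m"
  unfolding free_comb_def using supp_add[of c d] by (auto intro: finite_subset)
lemma fc_diff: "c \<in> free_comb m \<Longrightarrow> d \<in> free_comb m \<Longrightarrow> c - d \<in> free_comb m"
  unfolding free_comb_def using supp_diff[of c d] by (auto intro: finite_subset)
lemma fc_scale: "c \<in> free_comb m \<Longrightarrow> fscale a c \<in> free_comb m"
  unfolding free_comb_def using supp_scale[of a c] by (auto intro: finite_subset simp: fscale_def)
lemma fc_zero: "0 \<in> free_comb m"
  unfolding free_comb_def by auto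
lemma fc_sum: "(\<And>i. i < (k::nat) \<Longrightarrow> t i \<in> free_comb m) \<Longrightarrow> (\<Sum>i<k. fscale (a i) (t i)) \<in> free_comb m"
  by (induction k) (auto intro!: fc_add fc_scale fc_zero)

lemma p2_superset:
  assumes "finite S" "{xs. c xs \<noteq> 0} \<subseteq> S"
  shows "pairing2 f c w = (\<Sum>xs\<in>S. c xs * f (xs @ [w]))"
  unfolding pairing2_def using assms by (intro sum.mono_neutral_left) auto

lemma p2_add:
  assumes "finite {xs. c xs \<noteq> 0}" "finite {xs. d xs \<noteq> 0}"
  shows "pairing2 f (c + d) w = pairing2 f c w + pairing2 f d w"
proof -
  let ?S = "{xs. c xs \<noteq> 0} \<union> {xs. d xs \<noteq> 0}"
  have "pairing2 f (c + d) w = (\<Sum>xs\<in>?S. (c + d) xs * f (xs @ [w]))"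
    using assms supp_add[of c d] by (intro p2_superset) auto
  also have "\<dots> = (\<Sum>xs\<in>?S. c xs * f (xs @ [w])) + (\<Sum>xs\<in>?S. d xs * f (xs @ [w]))"
    by (simp add: distrib_right sum.distrib)
  also have "\<dots> = pairing2 f c w + pairing2 f d w"
    using assms p2_superset[of ?S c f w] p2_superset[of ?S d f w] by auto
  finally show ?thesis .
qed

lemma p2_diff:
  assumes "finite {xs. c xs \<noteq> 0}" "finite {xs. d xs \<noteq> 0}"
  shows "pairing2 f (c - d) w = pairing2 f c w - pairing2 f d w"
proof -
  let ?S = "{xs. c xs \<noteq> 0} \<union> {xs. d xs \<noteq> 0}"
  have "pairing2 f (c - d) w = (\<Sum>xs\<in>?S. (c - d) xs * f (xs @ [w]))"
    using assms supp_diff[of c d] by (intro p2_superset) auto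
  also have "\<dots> = (\<Sum>xs\<in>?S. c xs * f (xs @ [w])) - (\<Sum>xs\<in>?S. d xs * f (xs @ [w]))"
    by (simp add: left_diff_distrib sum_subtractf)
  also have "\<dots> = pairing2 f c w - pairing2 f d w"
    using assms p2_superset[of ?S c f w] p2_superset[of ?S d f w] by auto
  finally show ?thesis .
qed

lemma p2_scale:
  assumes "finite {xs. c xs \<noteq> 0}"
  shows "pairing2 f (fscale a c) w = a * pairing2 f c w"
proof -
  have "pairing2 f (fscale a c) w = (\<Sum>xs\<in>{xs. c xs \<noteq> 0}. fscale a c xs * f (xs @ [w]))"
    using assms supp_scale[of a c] by (intro p2_superset) auto
  also have "\<dots> = a * pairing2 f c w"
    using assms by (simp add: p2_superset sum_distrib_left fscale_def mult.assoc)
  finally show ?thesis .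
qed

lemma p2_zero: "pairing2 f 0 w = 0"
  unfolding pairing2_def by (simp add: zero_fun_def)

lemma p2_sum:
  assumes "\<And>i. i < (k::nat) \<Longrightarrow> t i \<in> free_comb m"
  shows "pairing2 f (\<Sum>i<k. fscale (a i) (t i)) w = (\<Sum>i<k. a i * pairing2 f (t i) w)"
  using assms
proof (induction k)
  case 0 then show ?case using p2_zero[of f w] by (simp add: zero_fun_def)
next
  case (Suc k)
  have "(\<Sum>i<k. fscale (a i) (t i)) \<in> free_comb m" using Suc.prems by (intro fc_sum) auto
  moreover have "fscale (a k) (t k) \<in> free_comb m" using Suc.prems by (intro fc_scale) auto
  moreover have "t k \<in> free_comb m" using Suc.prems by auto
  ultimately have "pairing2 f ((\<Sum>i<k. fscale (a i) (t i)) + fscale (a k) (t k)) w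
     = pairing2 f (\<Sum>i<k. fscale (a i) (t i)) w + a k * pairing2 f (t k) w"
    by (simp add: p2_add p2_scale free_comb_def del: plus_fun_apply)
  then show ?case using Suc by (simp only: sum.lessThan_Suc)
qed

lemma lin_last:
  assumes "multilinear_form scale n f" "n \<ge> 1" "length xs = n - 1"
  shows "Vector_Spaces.linear scale ((*) :: 'k::field \<Rightarrow> 'k \<Rightarrow> 'k) (\<lambda>v. f (xs @ [v]))"
proof -
  have "Vector_Spaces.linear scale ((*) :: 'k \<Rightarrow> 'k \<Rightarrow> 'k) (\<lambda>v. f ((xs @ [0])[n - 1 := v]))"
    using assms unfolding multilinear_form_def by auto
  moreover have "\<And>v. (xs @ [0])[n - 1 := v] = xs @ [v]"
    using assms(3) by (metis list_update_length)
  ultimately show ?thesis by simp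
qed

lemma p2_wadd:
  assumes "multilinear_form scale n f" "n \<ge> 1" "c \<in> free_comb (n - 1)"
  shows "pairing2 f c (u + v) = pairing2 f c u + pairing2 f c v"
proof -
  have "\<And>xs. xs \<in> {xs. c xs \<noteq> 0} \<Longrightarrow> f (xs @ [u + v]) = f (xs @ [u]) + f (xs @ [v])"
  proof -
    fix xs assume "xs \<in> {xs. c xs \<noteq> 0}"
    then have "length xs = n - 1" using assms(3) unfolding free_comb_def by auto
    from lin_last[OF assms(1,2) this] show "?thesis xs" unfolding Vector_Spaces.linear_iff by auto
  qed
  then show ?thesis unfolding pairing2_def
    by (simp add: distrib_left sum.distrib)
qed

lemma p2_wscale:
  assumes "multilinear_form scale n f" "n \<ge> 1" "c \<in> free_comb (n - 1)"
  shows "pairing2 f c (scale a u) = a * pairing2 f c u"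
proof -
  have "\<And>xs. xs \<in> {xs. c xs \<noteq> 0} \<Longrightarrow> f (xs @ [scale a u]) = a * f (xs @ [u])"
  proof -
    fix xs assume "xs \<in> {xs. c xs \<noteq> 0}"
    then have "length xs = n - 1" using assms(3) unfolding free_comb_def by auto
    from lin_last[OF assms(1,2) this] show "?thesis xs" unfolding Vector_Spaces.linear_iff by auto
  qed
  then show ?thesis unfolding pairing2_def
    by (simp add: sum_distrib_left algebra_simps)
qed

lemma p2_wzero:
  assumes "multilinear_form scale n f" "n \<ge> 1" "c \<in> free_comb (n - 1)"
  shows "pairing2 f c 0 = 0"
proof -
  have "pairing2 f c 0 + pairing2 f c 0 = pairing2 f c 0" using p2_wadd[OF assms, of 0 0] by simp
  then show ?thesis by (metis add_cancel_left_right)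
qed

lemma p2_wsum:
  assumes "multilinear_form scale n f" "n \<ge> 1" "c \<in> free_comb (n - 1)"
  shows "pairing2 f c (\<Sum>j<(k::nat). scale (a j) (W j)) = (\<Sum>j<k. a j * pairing2 f c (W j))"
  by (induction k) (simp_all add: p2_wzero[OF assms] p2_wadd[OF assms] p2_wscale[OF assms])


theorem lemma2p5:
  fixes scale :: "'k::field \<Rightarrow> 'v::ab_group_add \<Rightarrow> 'v"
    and f :: "'v list \<Rightarrow> 'k" and n :: nat and alt :: bool
  assumes "n \<ge> 2"
    and "nlinear_space scale n alt f"
    and "infinite_dimensional scale"
  shows "nondegenerate scale n alt f \<longleftrightarrow> generic scale n alt f"
proof
  have n1: "n \<ge> 1" using assms(1) by simp
  have ml: "multilinear_form scale n f" using assms(2) unfolding nlinear_space_def by simp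
  have M: "module (fscale :: 'k \<Rightarrow> ('v list \<Rightarrow> 'k) \<Rightarrow> ('v list \<Rightarrow> 'k))" by (rule mod_fscale)
  let ?FC = "free_comb (n - 1) :: ('v list \<Rightarrow> 'k) set"
  let ?R = "rel_space scale (n - 1) alt"
  let ?P = "pairing2 f"
  show "generic scale n alt f" if nd: "nondegenerate scale n alt f"
  proof -
    have "\<forall>t kk. (\<forall>i<m. t i \<in> ?FC) \<longrightarrow> lin_indep_mod scale (n - 1) alt m t \<longrightarrow>
        (\<exists>w. \<forall>i<m. ?P (t i) w = kk i)" for m
    proof (induction m)
      case 0 then show ?case by simp
    next
      case (Suc m)
      show ?case
      proof (intro allI impI)
        fix t :: "nat \<Rightarrow> 'v list \<Rightarrow> 'k" and kk :: "nat \<Rightarrow> 'k"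
        assume T: "\<forall>i<Suc m. t i \<in> ?FC" and I: "lin_indep_mod scale (n - 1) alt (Suc m) t"
        have Tm: "\<forall>i<m. t i \<in> ?FC" using T by simp
        have Im: "lin_indep_mod scale (n - 1) alt m t"
          unfolding lin_indep_mod_def
        proof (intro allI impI)
          fix a i assume A: "(\<Sum>i<m. fscale (a i) (t i)) \<in> ?R" and i: "i < m"
          define a' where "a' = a(m := 0)"
          have "(\<Sum>i<Suc m. fscale (a' i) (t i)) = (\<Sum>i<m. fscale (a i) (t i))"
            by (simp add: a'_def fscale_def zero_fun_def)
          with A have L: "(\<Sum>i<Suc m. fscale (a' i) (t i)) \<in> ?R" by simp
          have "\<forall>i<Suc m. a' i = 0" using I[unfolded lin_indep_mod_def, rule_format, OF L] by blast
          then have "a' i = 0" using i less_SucI by blast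
          moreover have "a' i = a i" using i unfolding a'_def by simp
          ultimately show "a i = 0" by simp
        qed
        have "\<forall>j. \<exists>w. j < m \<longrightarrow> (\<forall>i<m. ?P (t i) w = (if i = j then 1 else 0))"
        proof
          fix j
          show "\<exists>w. j < m \<longrightarrow> (\<forall>i<m. ?P (t i) w = (if i = j then 1 else 0))"
            using Suc.IH[rule_format, of t "\<lambda>i. if i = j then 1 else 0", OF Tm[rule_format] Im] by blast
        qed
        then obtain W where W: "\<And>j i. j < m \<Longrightarrow> i < m \<Longrightarrow> ?P (t i) (W j) = (if i = j then 1 else 0)"
          by metis
        define c where "c = t m - (\<Sum>j<m. fscale (?P (t m) (W j)) (t j))"
        have tmFC: "t m \<in> ?FC" using T by simp
        have sFC: "(\<Sum>j<m. fscale (?P (t m) (W j)) (t j)) \<in> ?FC" using Tm by (intro fc_sum) auto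
        have cFC: "c \<in> ?FC" unfolding c_def using tmFC sFC by (rule fc_diff)
        have cR: "c \<notin> ?R"
        proof
          assume cR: "c \<in> ?R"
          define a where "a = (\<lambda>i. if i = m then 1 else - ?P (t m) (W i))"
          have "(\<Sum>i<Suc m. fscale (a i) (t i)) = (\<Sum>i<m. fscale (- ?P (t m) (W i)) (t i)) + t m"
            by (simp add: a_def fscale_def)
          also have "\<dots> = c"
            unfolding c_def fscale_neg sum_negf by (simp only: diff_conv_add_uminus add.commute)
          finally have "(\<Sum>i<Suc m. fscale (a i) (t i)) \<in> ?R" using cR by simp
          then have "a m = 0" using I[unfolded lin_indep_mod_def, rule_format] by blast
          then show False by (simp add: a_def)
        qed
        obtain w where Pw: "?P c w \<noteq> 0" using nd cFC cR unfolding nondegenerate_def by blast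
        define w' where "w' = w + (\<Sum>j<m. scale (- ?P (t j) w) (W j))"
        have Pi: "?P (t i) w' = 0" if i: "i < m" for i
        proof -
          have tiFC: "t i \<in> ?FC" using Tm i by simp
          have "?P (t i) w' = ?P (t i) w + (\<Sum>j<m. (- ?P (t j) w) * ?P (t i) (W j))"
            unfolding w'_def by (simp add: p2_wadd[OF ml n1 tiFC] p2_wsum[OF ml n1 tiFC])
          also have "\<dots> = ?P (t i) w + (\<Sum>j<m. (if j = i then - ?P (t j) w else 0))"
            using W i by (intro arg_cong2[where f="(+)"] refl sum.cong) auto
          also have "\<dots> = 0" using i by simp
          finally show ?thesis .
        qed
        have Pm: "?P (t m) w' = ?P c w"
        proof -
          have "?P (t m) w' = ?P (t m) w + (\<Sum>j<m. (- ?P (t j) w) * ?P (t m) (W j))"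
            unfolding w'_def by (simp add: p2_wadd[OF ml n1 tmFC] p2_wsum[OF ml n1 tmFC])
          moreover have "?P c w = ?P (t m) w - (\<Sum>j<m. ?P (t m) (W j) * ?P (t j) w)"
            unfolding c_def using tmFC sFC Tm
            by (simp add: p2_diff free_comb_def p2_sum[of m t "n - 1"])
          ultimately show ?thesis by (simp add: sum_negf mult.commute)
        qed
        define w1 where "w1 = scale (1 / ?P c w) w'"
        have P1i: "?P (t i) w1 = 0" if i: "i < m" for i
          using Pi[OF i] Tm i unfolding w1_def by (simp add: p2_wscale[OF ml n1])
        have P1m: "?P (t m) w1 = 1"
          using Pm Pw unfolding w1_def by (simp add: p2_wscale[OF ml n1 tmFC])
        obtain w0 where w0: "\<forall>i<m. ?P (t i) w0 = kk i" using Suc.IH[rule_format, of t kk, OF Tm[rule_format] Im] by blast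
        define ww where "ww = w0 + scale (kk m - ?P (t m) w0) w1"
        have "\<forall>i<Suc m. ?P (t i) ww = kk i"
        proof (intro allI impI)
          fix i assume i: "i < Suc m"
          then have tiFC: "t i \<in> ?FC" using T by simp
          have "?P (t i) ww = ?P (t i) w0 + (kk m - ?P (t m) w0) * ?P (t i) w1"
            unfolding ww_def by (simp add: p2_wadd[OF ml n1 tiFC] p2_wscale[OF ml n1 tiFC])
          then show "?P (t i) ww = kk i"
            using i w0 P1i P1m by (cases "i = m") auto
        qed
        then show "\<exists>w. \<forall>i<Suc m. ?P (t i) w = kk i" by blast
      qed
    qed
    then show ?thesis unfolding generic_def by blast
  qed
  show "nondegenerate scale n alt f" if g: "generic scale n alt f"
    unfolding nondegenerate_def
  proof (intro ballI impI)
    fix c assume cFC: "c \<in> ?FC" and cR: "c \<notin> ?R"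
    have "lin_indep_mod scale (n - 1) alt 1 (\<lambda>_. c)"
      unfolding lin_indep_mod_def
    proof (intro allI impI)
      fix a :: "nat \<Rightarrow> 'k" and i :: nat
      assume A: "(\<Sum>i<1. fscale (a i) c) \<in> ?R" and i: "i < 1"
      show "a i = 0"
      proof (rule ccontr)
        assume ne: "a i \<noteq> 0"
        have "fscale (a 0) c \<in> ?R" using A by simp
        then have "fscale (1 / a 0) (fscale (a 0) c) \<in> ?R"
          unfolding rel_space_def by (rule module.span_scale[OF M])
        moreover have "fscale (1 / a 0) (fscale (a 0) c) = c"
          using ne i by (simp add: fscale_def fun_eq_iff)
        ultimately show False using cR by simp
      qed
    qed
    moreover have "\<forall>i<1. (\<lambda>_. c) i \<in> ?FC" using cFC by simp
    ultimately obtain w where "\<forall>i<(1::nat). ?P ((\<lambda>_. c) i) w = (\<lambda>_. 1::'k) i"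
      using g[unfolded generic_def, THEN spec[of _ 1], THEN spec[of _ "\<lambda>_. c"], THEN spec[of _ "\<lambda>_. 1"]]
      by blast
    then have "?P c w = 1" by simp
    then show "\<exists>w. ?P c w \<noteq> 0" by (intro exI[of _ w]) simp
  qed
qed

end
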